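(* Let $n\ge1$, $\gamma>1$, $V_0>0$, $\rho\in(0,1/n)$, $\theta>1$, $t\in[0,n]$, $\vartheta\in(0,1)$, original qualities $\alpha_1>\dots>\alpha_n>0$, and let $h:[0,1]\to[1,\infty)$ be differentiable, increasing and concave with $h(0)=1$, $h(1)=\bar h>1$. Assume $n\frac{\gamma-1}{\gamma}<1$, $\bar h^{1/\gamma}>\frac1{1-n\rho}$, and $\frac{h'(x)}{\gamma h(x)}>\frac{n\rho}{1-n\rho x}$ for all $x\in[0,1]$. Let $V^*=\frac{\gamma-1}{n-(n-1)\gamma}V_0$. Consider the simultaneous game in which each seller $i$ chooses $x_i\in[0,1]$ to maximize $$\pi_i^p(x_i,x_{-i})=\frac{\gamma-1}{\gamma}\Big(\frac{\alpha_i h(x_i)}{V^*}\Big)^{1/\gamma}\Big[1-\rho\sum_{j=1}^n x_j\Big]\Big(1-\vartheta-\theta\frac{t}{n}x_i\Big).$$ Define $\tau_1=\frac{h'(0)}{\gamma}-\rho$ and $\tau_2=\Big[1+\Big(\frac{h'(1)}{\gamma\bar h}-\frac{\rho}{1-n\rho}\Big)^{-1}\Big]^{-1}$. Then $\tau_1>\tau_2>0$, and the sellers' equilibrium adulteration decisions are symmetric, $x_i^*=x^*$ for all $i$, where: (1) if $\theta\frac{t}{n}\ge\tau_1(1-\vartheta)$, then $x^*=0$; (2) if $\theta\frac{t}{n}\le\tau_2(1-\vartheta)$, then $x^*=1$; (3) otherwise $x^*=\hat x$, where $\hat x\in(0,1)$ is determined by the equation $$\Big(\frac{h'(x)}{\gamma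 h(x)}-\frac{\rho}{1-n\rho x}\Big)\Big(1-\vartheta-\theta\frac{t}{n}x\Big)=\theta\frac{t}{n}.$$
   Context: $\pi_i^p$ is seller $i$'s expected profit on an e-commerce platform under preemptive economically motivated adulteration (adulteration chosen before the common quality uncertainty is realized), after substituting equilibrium prices. $x_i$ is the amount of adulterant, $h$ the quality improvement it produces, $\rho$ consumers' quality consciousness, $\gamma$ price sensitivity, $V_0$ the outside option's quality-price ratio, $\vartheta$ the platform's take rate, $t$ the number of randomly inspected sellers, and $\theta$ the penalty intensity; $\theta t/n$ is the "overall penalty risk". *)

theory Defs
  imports "HOL-Analysis.Analysis"
begin

definition Vstar :: "nat \<Rightarrow> real \<Rightarrow> real \<Rightarrow> real" where
  "Vstar n \<gamma> V0 = (\<gamma> - 1) / (real n - (real n - 1) * \<gamma>) * V0"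

definition profit ::
  "nat \<Rightarrow> real \<Rightarrow> real \<Rightarrow> real \<Rightarrow> real \<Rightarrow> real \<Rightarrow> real \<Rightarrow> (nat \<Rightarrow> real)
   \<Rightarrow> (real \<Rightarrow> real) \<Rightarrow> (nat \<Rightarrow> real) \<Rightarrow> nat \<Rightarrow> real" where
  "profit n \<gamma> V0 \<rho> \<phi> \<theta> t \<alpha> h x i =
     (\<gamma> - 1) / \<gamma> * (\<alpha> i * h (x i) / Vstar n \<gamma> V0) powr (1 / \<gamma>)
     * (1 - \<rho> * (\<Sum>j\<in>{1..n}. x j))
     * (1 - \<phi> - \<theta> * (t / real n) * x i)"

definition is_NE :: "nat \<Rightarrow> ((nat \<Rightarrow> real) \<Rightarrow> nat \<Rightarrow> real) \<Rightarrow> (nat \<Rightarrow> real) \<Rightarrow> bool" where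
  "is_NE n u x \<longleftrightarrow>
     (\<forall>i\<in>{1..n}. x i \<in> {0..1}) \<and>
     (\<forall>i\<in>{1..n}. \<forall>y\<in>{0..1}. u (x(i := y)) i \<le> u x i)"

definition tau1 :: "real \<Rightarrow> real \<Rightarrow> (real \<Rightarrow> real) \<Rightarrow> real" where
  "tau1 \<gamma> \<rho> h' = h' 0 / \<gamma> - \<rho>"

definition tau2 :: "nat \<Rightarrow> real \<Rightarrow> real \<Rightarrow> real \<Rightarrow> (real \<Rightarrow> real) \<Rightarrow> real" where
  "tau2 n \<gamma> \<rho> hbar h' =
     inverse (1 + inverse (h' 1 / (\<gamma> * hbar) - \<rho> / (1 - real n * \<rho>)))"

end

theory Submission
  imports Defs
begin


lemma concave_tangent:
  fixes h h' :: "real \<Rightarrow> real"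
  assumes cc: "concave_on {0..1} h"
    and d: "\<forall>x\<in>{0..1}. (h has_real_derivative h' x) (at x within {0..1})"
    and x: "x \<in> {0..1}" and y: "y \<in> {0..1}"
  shows "h y \<le> h x + h' x * (y - x)"
proof (cases x y rule: linorder_cases)
  case less
  show ?thesis
  proof (rule ccontr)
    assume nt: "\<not> ?thesis"
    define m where "m = (h y - h x) / (y - x)"
    have hy: "h y = h x + m * (y - x)" using less by (simp add: m_def)
    have mgt: "h' x < m"
    proof -
      have "h' x * (y - x) < m * (y - x)" using nt hy by linarith
      then show ?thesis using less by (simp add: mult_less_cancel_right)
    qed
    have dq: "((\<lambda>z. h z - m * z) has_real_derivative (h' x - m)) (at x within {0..1})"
      using d x by (auto intro!: derivative_eq_intros)
    obtain e where e: "e > 0" and ee: "\<forall>w>0. x + w \<in> {0..1} \<longrightarrow> w < e \<longrightarrow> h (x + w) - m * (x + w) < h x - m * x"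
      using has_real_derivative_neg_dec_right[OF dq] mgt by auto
    define w where "w = min (e/2) (y - x)"
    have w: "w > 0" "w \<le> y - x" "w < e" using e less by (auto simp: w_def)
    define tt where "tt = w / (y - x)"
    have tt: "0 \<le> tt" "tt \<le> 1" using w less by (auto simp: tt_def)
    have tw: "tt * (y - x) = w" using less by (simp add: tt_def)
    have "(1 - tt) *\<^sub>R x + tt *\<^sub>R y = x + tt * (y - x)" by (simp add: algebra_simps)
    hence eqp: "(1 - tt) *\<^sub>R x + tt *\<^sub>R y = x + w" using tw by simp
    have "h ((1 - tt) *\<^sub>R x + tt *\<^sub>R y) \<ge> (1 - tt) * h x + tt * h y"
      by (rule concave_onD[OF cc tt x y])
    hence "h (x + w) \<ge> (1 - tt) * h x + tt * h y" using eqp by simp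
    also have "(1 - tt) * h x + tt * h y = h x + m * (tt * (y - x))" unfolding hy by (simp add: algebra_simps)
    also have "\<dots> = h x + m * w" using tw by simp
    finally have "h (x + w) - m * (x + w) \<ge> h x - m * x" by (simp add: algebra_simps)
    moreover have "x + w \<in> {0..1}" using x y w by auto
    ultimately show False using ee w by force
  qed
next
  case greater
  show ?thesis
  proof (rule ccontr)
    assume nt: "\<not> ?thesis"
    define m where "m = (h x - h y) / (x - y)"
    have hy: "h y = h x - m * (x - y)" using greater by (simp add: m_def)
    have mgt: "m < h' x"
    proof -
      have "m * (x - y) < h' x * (x - y)" using nt hy by (simp add: algebra_simps)
      then show ?thesis using greater by (simp add: mult_less_cancel_right)
    qed
    have dq: "((\<lambda>z. h z - m * z) has_real_derivative (h' x - m)) (at x within {0..1})"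
      using d x by (auto intro!: derivative_eq_intros)
    obtain e where e: "e > 0" and ee: "\<forall>w>0. x - w \<in> {0..1} \<longrightarrow> w < e \<longrightarrow> h (x - w) - m * (x - w) < h x - m * x"
      using has_real_derivative_pos_inc_left[OF dq] mgt by auto
    define w where "w = min (e/2) (x - y)"
    have w: "w > 0" "w \<le> x - y" "w < e" using e greater by (auto simp: w_def)
    define tt where "tt = w / (x - y)"
    have tt: "0 \<le> tt" "tt \<le> 1" using w greater by (auto simp: tt_def)
    have tw: "tt * (x - y) = w" using greater by (simp add: tt_def)
    have "(1 - tt) *\<^sub>R x + tt *\<^sub>R y = x - tt * (x - y)" by (simp add: algebra_simps)
    hence eqp: "(1 - tt) *\<^sub>R x + tt *\<^sub>R y = x - w" using tw by simp
    have "h ((1 - tt) *\<^sub>R x + tt *\<^sub>R y) \<ge> (1 - tt) * h x + tt * h y"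
      by (rule concave_onD[OF cc tt x y])
    hence "h (x - w) \<ge> (1 - tt) * h x + tt * h y" using eqp by simp
    also have "(1 - tt) * h x + tt * h y = h x - m * (tt * (x - y))" unfolding hy by (simp add: algebra_simps)
    also have "\<dots> = h x - m * w" using tw by simp
    finally have "h (x - w) - m * (x - w) \<ge> h x - m * x" by (simp add: algebra_simps)
    moreover have "x - w \<in> {0..1}" using x y w by auto
    ultimately show False using ee w by force
  qed
qed simp



definition FF :: "(real\<Rightarrow>real) \<Rightarrow> real \<Rightarrow> real \<Rightarrow> real \<Rightarrow> real \<Rightarrow> real \<Rightarrow> real \<Rightarrow> real \<Rightarrow> real" where
 "FF h \<gamma> a b e c k y = h y powr (1/\<gamma>) * (a - b*y) powr e * (c - k*y)"
definition GG :: "(real\<Rightarrow>real) \<Rightarrow> (real\<Rightarrow>real) \<Rightarrow> real \<Rightarrow> real \<Rightarrow> real \<Rightarrow> real \<Rightarrow> real \<Rightarrow> real \<Rightarrow> real \<Rightarrow> real" where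
 "GG h h' \<gamma> a b e c k y = h' y/(\<gamma> * h y) - e*b/(a - b*y) - k/(c - k*y)"

lemma powr_m1: "(z::real) > 0 \<Longrightarrow> z powr (p - 1) = z powr p / z"
  by (simp add: powr_diff)

lemma alg_id:
  fixes H A E P Q g e b k hd :: real
  assumes "H > 0" "A > 0" "E > 0" "g > 0"
  shows "(((1/g) * (P/H)) * hd * Q + P * ((e * (Q/A)) * (-b))) * E + P * Q * (-k)
     = P * Q * E * (hd/(g*H) - e*b/A - k/E)"
  using assms by (simp add: field_simps)

lemma FF_deriv:
  assumes d: "(h has_real_derivative h' x) (at x within S)"
    and hx: "h x > 0" and ax: "a - b*x > 0" and cx: "c - k*x > 0" and g: "\<gamma> > 0"
  shows "(FF h \<gamma> a b e c k has_real_derivative FF h \<gamma> a b e c k x * GG h h' \<gamma> a b e c k x) (at x within S)"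
proof -
  have d1: "((\<lambda>y. h y powr (1/\<gamma>)) has_real_derivative ((1/\<gamma>) * h x powr (1/\<gamma> - 1)) * h' x) (at x within S)"
    by (rule DERIV_chain2[OF has_real_derivative_powr[OF hx] d])
  have d2: "((\<lambda>y. a - b*y) has_real_derivative -b) (at x within S)"
    by (auto intro!: derivative_eq_intros)
  have d2': "((\<lambda>y. (a - b*y) powr e) has_real_derivative (e * (a - b*x) powr (e - 1)) * (-b)) (at x within S)"
    by (rule DERIV_chain2[OF has_real_derivative_powr[OF ax] d2])
  have d3: "((\<lambda>y. c - k*y) has_real_derivative -k) (at x within S)"
    by (auto intro!: derivative_eq_intros)
  have D: "((\<lambda>y. h y powr (1/\<gamma>) * (a - b*y) powr e * (c - k*y)) has_real_derivative
     (((1/\<gamma>) * h x powr (1/\<gamma> - 1)) * h' x * (a - b*x) powr e + h x powr (1/\<gamma>) * ((e * (a - b*x) powr (e - 1)) * (-b))) * (c - k*x)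
     + h x powr (1/\<gamma>) * (a - b*x) powr e * (-k)) (at x within S)"
    using DERIV_mult[OF DERIV_mult[OF d1 d2'] d3] by (simp add: algebra_simps)
  have eq: "(((1/\<gamma>) * h x powr (1/\<gamma> - 1)) * h' x * (a - b*x) powr e + h x powr (1/\<gamma>) * ((e * (a - b*x) powr (e - 1)) * (-b))) * (c - k*x)
     + h x powr (1/\<gamma>) * (a - b*x) powr e * (-k) = FF h \<gamma> a b e c k x * GG h h' \<gamma> a b e c k x"
  proof -
    have r1: "h x powr (1/\<gamma> - 1) = h x powr (1/\<gamma>) / h x" using hx by (rule powr_m1)
    have r2: "(a - b*x) powr (e - 1) = (a - b*x) powr e / (a - b*x)" using ax by (rule powr_m1)
    show ?thesis unfolding FF_def GG_def r1 r2 using alg_id[OF hx ax cx g] by simp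
  qed
  show ?thesis using D unfolding eq[symmetric] by (simp add: FF_def[abs_def])
qed

lemma max_deriv_sign:
  fixes f :: "real \<Rightarrow> real" and D x :: real
  assumes d: "(f has_real_derivative D) (at x within {0..1})" and x: "x \<in> {0..1}"
    and mx: "\<forall>y\<in>{0..1}. f y \<le> f x"
  shows "\<forall>y\<in>{0..1}. D * (y - x) \<le> 0"
proof -
  have p: "\<not> (D > 0 \<and> x < 1)"
  proof
    assume a: "D > 0 \<and> x < 1"
    obtain e where e: "e > 0" and ee: "\<forall>w>0. x + w \<in> {0..1} \<longrightarrow> w < e \<longrightarrow> f x < f (x + w)"
      using has_real_derivative_pos_inc_right[OF d] a by auto
    define w where "w = min (e/2) (1 - x)"
    have "w > 0" "w < e" "x + w \<in> {0..1}" using e a x by (auto simp: w_def)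
    then show False using ee mx by force
  qed
  have n: "\<not> (D < 0 \<and> x > 0)"
  proof
    assume a: "D < 0 \<and> x > 0"
    obtain e where e: "e > 0" and ee: "\<forall>w>0. x - w \<in> {0..1} \<longrightarrow> w < e \<longrightarrow> f x < f (x - w)"
      using has_real_derivative_neg_dec_left[OF d] a by auto
    define w where "w = min (e/2) x"
    have w: "w > 0" "w < e" "x - w \<in> {0..1}" using e a x by (auto simp: w_def)
    have "f x < f (x - w)" using ee w by blast
    moreover have "f (x - w) \<le> f x" using mx w by blast
    ultimately show False by simp
  qed
  show ?thesis
  proof
    fix y :: real assume y: "y \<in> {0..1}"
    consider "D > 0" | "D = 0" | "D < 0" by linarith
    then show "D * (y - x) \<le> 0"
    proof cases
      case 1 then have "x = 1" using p x by auto
      then show ?thesis using 1 y by (simp add: mult_nonneg_nonpos)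
    next
      case 3 then have "x = 0" using n x by auto
      then show ?thesis using 3 y by (simp add: mult_nonpos_nonneg)
    qed simp
  qed
qed

lemma ln_diff_less: "(x::real) > 0 \<Longrightarrow> y > 0 \<Longrightarrow> x \<noteq> y \<Longrightarrow> ln x - ln y < (x - y) / y"
proof -
  assume a: "x > 0" "y > 0" "x \<noteq> y"
  have "ln (x/y) \<le> x/y - 1" using a by (simp add: ln_le_minus_one)
  moreover have "ln (x/y) \<noteq> x/y - 1"
  proof
    assume "ln (x/y) = x/y - 1"
    then have "x/y = 1" using a by (intro ln_eq_minus_one) auto
    then show False using a by simp
  qed
  ultimately have "ln (x/y) < x/y - 1" by simp
  moreover have "ln (x/y) = ln x - ln y" using a by (simp add: ln_div)
  moreover have "x/y - 1 = (x - y)/y" using a by (simp add: field_simps)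
  ultimately show ?thesis by simp
qed

lemma alg_id2:
  fixes H A E g q d e b k :: real
  assumes "H > 0" "A > 0" "E > 0" "g > 0"
  shows "(1/g) * (q * d / H) + e * (- b * d / A) + (- k * d / E) = (q/(g*H) - e*b/A - k/E) * d"
  using assms by (simp add: field_simps)

lemma FF_suff:
  assumes cc: "concave_on {0..1} h"
    and d: "\<forall>x\<in>{0..1}. (h has_real_derivative h' x) (at x within {0..1})"
    and hpos: "\<forall>x\<in>{0..1}. h x > 0" and g: "\<gamma> > 0" and b: "b > 0" and e: "e > 0"
    and ab: "a - b > 0" and x: "x \<in> {0..1}" and cx: "c - k*x > 0"
    and cond: "\<forall>y\<in>{0..1}. GG h h' \<gamma> a b e c k x * (y - x) \<le> 0"
  shows "\<forall>y\<in>{0..1}. y \<noteq> x \<longrightarrow> FF h \<gamma> a b e c k y < FF h \<gamma> a b e c k x"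
proof (intro ballI impI)
  fix y :: real assume y: "y \<in> {0..1}" and yx: "y \<noteq> x"
  have Apos: "a - b*z > 0" if "z \<in> {0..1}" for z
  proof -
    have "b * z \<le> b" using that b by (simp add: mult_left_le)
    then show ?thesis using ab by linarith
  qed
  have Ax: "a - b*x > 0" and Ay: "a - b*y > 0" using Apos x y by auto
  have hx: "h x > 0" and hy: "h y > 0" using hpos x y by auto
  have FFx: "FF h \<gamma> a b e c k x > 0" unfolding FF_def using hx Ax cx by simp
  show "FF h \<gamma> a b e c k y < FF h \<gamma> a b e c k x"
  proof (cases "c - k*y \<le> 0")
    case True
    have "FF h \<gamma> a b e c k y \<le> 0" unfolding FF_def using hy Ay True
      by (simp add: mult_nonneg_nonpos)
    then show ?thesis using FFx by simp
  next
    case False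
    then have cy: "c - k*y > 0" by simp
    have FFy: "FF h \<gamma> a b e c k y > 0" unfolding FF_def using hy Ay cy by simp
    have lnF: "ln (FF h \<gamma> a b e c k z) = (1/\<gamma>) * ln (h z) + e * ln (a - b*z) + ln (c - k*z)"
      if "h z > 0" "a - b*z > 0" "c - k*z > 0" for z
      unfolding FF_def using that by (simp add: ln_mult)
    have t1: "ln (h y) - ln (h x) \<le> h' x * (y - x) / h x"
    proof -
      have "ln (h y) - ln (h x) \<le> (h y - h x) / h x" using hy hx by (rule ln_diff_le)
      also have "\<dots> \<le> h' x * (y - x) / h x"
        using concave_tangent[OF cc d x y] hx by (simp add: divide_right_mono)
      finally show ?thesis .
    qed
    have t2: "ln (a - b*y) - ln (a - b*x) < - b * (y - x) / (a - b*x)"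
    proof -
      have "a - b*y \<noteq> a - b*x" using yx b by simp
      then have "ln (a - b*y) - ln (a - b*x) < ((a - b*y) - (a - b*x)) / (a - b*x)"
        using Ax Ay by (intro ln_diff_less) auto
      also have "((a - b*y) - (a - b*x)) = - b * (y - x)" by (simp add: algebra_simps)
      finally show ?thesis .
    qed
    have t3: "ln (c - k*y) - ln (c - k*x) \<le> - k * (y - x) / (c - k*x)"
    proof -
      have "ln (c - k*y) - ln (c - k*x) \<le> ((c - k*y) - (c - k*x)) / (c - k*x)"
        using cx cy by (intro ln_diff_le) auto
      also have "((c - k*y) - (c - k*x)) = - k * (y - x)" by (simp add: algebra_simps)
      finally show ?thesis .
    qed
    have s1: "(1/\<gamma>) * (ln (h y) - ln (h x)) \<le> (1/\<gamma>) * (h' x * (y - x) / h x)"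
      using t1 g by (intro mult_left_mono) auto
    have s2: "e * (ln (a - b*y) - ln (a - b*x)) < e * (- b * (y - x) / (a - b*x))"
      using mult_strict_left_mono[OF t2 e] .
    have "ln (FF h \<gamma> a b e c k y) - ln (FF h \<gamma> a b e c k x)
        = (1/\<gamma>) * (ln (h y) - ln (h x)) + e * (ln (a - b*y) - ln (a - b*x)) + (ln (c - k*y) - ln (c - k*x))"
      using lnF[OF hy Ay cy] lnF[OF hx Ax cx] by (simp add: algebra_simps)
    also have "\<dots> < (1/\<gamma>) * (h' x * (y - x) / h x) + e * (- b * (y - x) / (a - b*x)) + (- k * (y - x) / (c - k*x))"
      using s1 s2 t3 by linarith
    also have "\<dots> = GG h h' \<gamma> a b e c k x * (y - x)"
      unfolding GG_def using alg_id2[of "h x" "a - b*x" "c - k*x" \<gamma>] hx Ax cx g by simp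
    also have "\<dots> \<le> 0" using cond y by blast
    finally have "ln (FF h \<gamma> a b e c k y) < ln (FF h \<gamma> a b e c k x)" by simp
    then show ?thesis using FFx FFy by simp
  qed
qed

lemma FF_nec:
  assumes d: "\<forall>x\<in>{0..1}. (h has_real_derivative h' x) (at x within {0..1})"
    and hpos: "\<forall>x\<in>{0..1}. h x > 0" and g: "\<gamma> > 0" and b: "b > 0"
    and ab: "a - b > 0" and c: "c > 0" and x: "x \<in> {0..1}"
    and mx: "\<forall>y\<in>{0..1}. FF h \<gamma> a b e c k y \<le> FF h \<gamma> a b e c k x"
  shows "c - k*x > 0 \<and> (\<forall>y\<in>{0..1}. GG h h' \<gamma> a b e c k x * (y - x) \<le> 0)"
proof -
  have Apos: "a - b*z > 0" if "z \<in> {0..1}" for z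
  proof -
    have "b * z \<le> b" using that b by (simp add: mult_left_le)
    then show ?thesis using ab by linarith
  qed
  have Ax: "a - b*x > 0" using Apos x by auto
  have hx: "h x > 0" using hpos x by auto
  have h0: "h 0 > 0" using hpos by auto
  have "FF h \<gamma> a b e c k 0 > 0" unfolding FF_def using h0 Apos[of 0] c by simp
  then have FFx: "FF h \<gamma> a b e c k x > 0" using mx by force
  have cx: "c - k*x > 0"
  proof (rule ccontr)
    assume "\<not> ?thesis"
    then have "FF h \<gamma> a b e c k x \<le> 0" unfolding FF_def using hx Ax
      by (simp add: mult_nonneg_nonpos)
    then show False using FFx by simp
  qed
  have D: "(FF h \<gamma> a b e c k has_real_derivative FF h \<gamma> a b e c k x * GG h h' \<gamma> a b e c k x) (at x within {0..1})"
    using d x hx Ax cx g by (intro FF_deriv) auto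
  have "\<forall>y\<in>{0..1}. (FF h \<gamma> a b e c k x * GG h h' \<gamma> a b e c k x) * (y - x) \<le> 0"
    by (rule max_deriv_sign[OF D x mx])
  then have "\<forall>y\<in>{0..1}. GG h h' \<gamma> a b e c k x * (y - x) \<le> 0"
    using FFx by (simp add: mult.assoc mult_le_0_iff)
  with cx show ?thesis by simp
qed


lemma sum_upd:
  fixes n i :: nat and x :: "nat \<Rightarrow> real"
  assumes i: "i \<in> {1..n}"
  shows "(\<Sum>j\<in>{1..n}. (x(i := y)) j) = y + (\<Sum>j\<in>{1..n}-{i}. x j)"
proof -
  have "(\<Sum>j\<in>{1..n}. (x(i := y)) j) = (x(i := y)) i + (\<Sum>j\<in>{1..n}-{i}. (x(i := y)) j)"
    by (rule sum.remove) (use i in auto)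
  also have "(\<Sum>j\<in>{1..n}-{i}. (x(i := y)) j) = (\<Sum>j\<in>{1..n}-{i}. x j)"
    by (intro sum.cong) auto
  finally show ?thesis by simp
qed

lemma S_bounds:
  fixes x :: "nat \<Rightarrow> real"
  assumes i: "i \<in> {1..n}" and xr: "\<forall>j\<in>{1..n}. x j \<in> {0..1}"
  shows "0 \<le> (\<Sum>j\<in>{1..n}-{i}. x j) \<and> (\<Sum>j\<in>{1..n}-{i}. x j) \<le> real n - 1"
proof
  show "0 \<le> (\<Sum>j\<in>{1..n}-{i}. x j)" using xr by (intro sum_nonneg) auto
  have "(\<Sum>j\<in>{1..n}-{i}. x j) \<le> of_nat (card ({1..n}-{i})) * 1"
    using xr by (intro sum_bounded_above) auto
  also have "card ({1..n}-{i}) = n - 1" using i by simp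
  finally show "(\<Sum>j\<in>{1..n}-{i}. x j) \<le> real n - 1" using i by (simp add: of_nat_diff)
qed

lemma S_const:
  assumes i: "i \<in> {1..n}"
  shows "(\<Sum>j\<in>{1..n}-{i}. (\<lambda>_. z) j) = (real n - 1) * (z::real)"
  using i by (simp add: of_nat_diff)

lemma u_eq:
  assumes V: "Vstar n \<gamma> V0 > 0" and ai: "\<alpha> i > 0" and hy: "h y \<ge> 0" and i: "i \<in> {1..n}"
    and nn: "1 - \<rho> * (\<Sum>j\<in>{1..n}-{i}. x j) - \<rho> * y \<ge> 0"
  shows "profit n \<gamma> V0 \<rho> \<phi> \<theta> t \<alpha> h (x(i := y)) i
     = ((\<gamma> - 1) / \<gamma> * (\<alpha> i / Vstar n \<gamma> V0) powr (1/\<gamma>))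
       * FF h \<gamma> (1 - \<rho> * (\<Sum>j\<in>{1..n}-{i}. x j)) \<rho> 1 (1 - \<phi>) (\<theta> * (t / real n)) y"
proof -
  have "(\<alpha> i * h y / Vstar n \<gamma> V0) powr (1/\<gamma>) = (\<alpha> i / Vstar n \<gamma> V0) powr (1/\<gamma>) * h y powr (1/\<gamma>)"
    by (simp add: powr_mult[symmetric])
  moreover have "\<bar>1 - \<rho> * (\<Sum>j\<in>{1..n}-{i}. x j) - \<rho> * y\<bar> = 1 - \<rho> * (y + (\<Sum>j\<in>{1..n}-{i}. x j))"
    using nn by (simp add: algebra_simps)
  ultimately show ?thesis
    unfolding profit_def FF_def sum_upd[OF i, of x y] powr_one'
    by (simp add: mult_ac)
qed



theorem theorem2:
  fixes n :: nat and \<gamma> V0 \<rho> \<theta> t \<phi> hbar :: real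
    and \<alpha> :: "nat \<Rightarrow> real" and h h' :: "real \<Rightarrow> real"
  assumes n: "n \<ge> 1"
    and \<gamma>: "\<gamma> > 1" and V0: "V0 > 0"
    and \<rho>: "0 < \<rho>" "\<rho> < 1 / real n"
    and \<theta>: "\<theta> > 1"
    and t: "0 \<le> t" "t \<le> real n"
    and \<phi>: "0 < \<phi>" "\<phi> < 1"
    and \<alpha>_dec: "\<forall>i j. 1 \<le> i \<longrightarrow> i < j \<longrightarrow> j \<le> n \<longrightarrow> \<alpha> j < \<alpha> i"
    and \<alpha>_pos: "\<alpha> n > 0"
    and h_deriv: "\<forall>x\<in>{0..1}. (h has_real_derivative h' x) (at x within {0..1})"
    and h_mono: "mono_on {0..1} h"
    and h_concave: "concave_on {0..1} h"
    and h_range: "\<forall>x\<in>{0..1}. h x \<ge> 1"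
    and h0: "h 0 = 1" and h1: "h 1 = hbar" and hbar: "hbar > 1"
    and A1: "real n * ((\<gamma> - 1) / \<gamma>) < 1"
    and A2: "hbar powr (1 / \<gamma>) > 1 / (1 - real n * \<rho>)"
    and A3: "\<forall>x\<in>{0..1}. h' x / (\<gamma> * h x) > real n * \<rho> / (1 - real n * \<rho> * x)"
  defines "u \<equiv> profit n \<gamma> V0 \<rho> \<phi> \<theta> t \<alpha> h"
    and "\<tau>\<^sub>1 \<equiv> tau1 \<gamma> \<rho> h'"
    and "\<tau>\<^sub>2 \<equiv> tau2 n \<gamma> \<rho> hbar h'"
  shows "\<tau>\<^sub>1 > \<tau>\<^sub>2 \<and> \<tau>\<^sub>2 > 0 \<and>
    (\<theta> * (t / real n) \<ge> \<tau>\<^sub>1 * (1 - \<phi>) \<longrightarrow>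
       is_NE n u (\<lambda>_. 0) \<and> (\<forall>x. is_NE n u x \<longrightarrow> (\<forall>i\<in>{1..n}. x i = 0))) \<and>
    (\<theta> * (t / real n) \<le> \<tau>\<^sub>2 * (1 - \<phi>) \<longrightarrow>
       is_NE n u (\<lambda>_. 1) \<and> (\<forall>x. is_NE n u x \<longrightarrow> (\<forall>i\<in>{1..n}. x i = 1))) \<and>
    (\<tau>\<^sub>2 * (1 - \<phi>) < \<theta> * (t / real n) \<and> \<theta> * (t / real n) < \<tau>\<^sub>1 * (1 - \<phi>) \<longrightarrow>
       (\<exists>xh. 0 < xh \<and> xh < 1 \<and>
          (h' xh / (\<gamma> * h xh) - \<rho> / (1 - real n * \<rho> * xh)) * (1 - \<phi> - \<theta> * (t / real n) * xh)
            = \<theta> * (t / real n) \<and>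
          is_NE n u (\<lambda>_. xh) \<and> (\<forall>x. is_NE n u x \<longrightarrow> (\<forall>i\<in>{1..n}. x i = xh))))"
  proof -
  define k where "k = \<theta> * (t / real n)"
  define w where "w = 1 - \<phi>"
  define V where "V = Vstar n \<gamma> V0"
  define C where "C i = (\<gamma> - 1) / \<gamma> * (\<alpha> i / V) powr (1/\<gamma>)" for i
  define S where "S x i = (\<Sum>j\<in>{1..n}-{i}. x j)" for x :: "nat \<Rightarrow> real" and i
  define F where "F x i = FF h \<gamma> (1 - \<rho> * S x i) \<rho> 1 w k" for x i
  define Gi where "Gi x i = GG h h' \<gamma> (1 - \<rho> * S x i) \<rho> 1 w k" for x i
  define D where "D = h' 1 / (\<gamma> * hbar) - \<rho> / (1 - real n * \<rho>)"
  define G where "G = FF h \<gamma> 1 (real n * \<rho>) (1 / real n) w k"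
  define GGG where "GGG = GG h h' \<gamma> 1 (real n * \<rho>) (1 / real n) w k"
  have npos: "real n > 0" using n by simp
  have k0: "k \<ge> 0" using \<theta> t by (simp add: k_def)
  have w0: "w > 0" using \<phi> by (simp add: w_def)
  have g0: "\<gamma> > 0" using \<gamma> by simp
  have nr: "real n * \<rho> < 1"
  proof -
    have "real n * \<rho> < real n * (1 / real n)" using \<rho>(2) npos by (intro mult_strict_left_mono) auto
    then show ?thesis using npos by simp
  qed
  have nr0: "0 < 1 - real n * \<rho>" using nr by simp
  have rle: "\<rho> \<le> real n * \<rho>" using n \<rho>(1) by simp
  have Vpos: "V > 0"
  proof -
    have "real n * (\<gamma> - 1) < \<gamma>" using A1 g0 by (simp add: field_simps)
    then have "real n - (real n - 1) * \<gamma> > 0" by (simp add: algebra_simps)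
    then show ?thesis unfolding V_def Vstar_def using \<gamma> V0 by simp
  qed
  have apos: "\<forall>i\<in>{1..n}. \<alpha> i > 0"
  proof
    fix i assume i: "i \<in> {1..n}"
    show "\<alpha> i > 0"
    proof (cases "i = n")
      case True then show ?thesis using \<alpha>_pos by simp
    next
      case False then have "\<alpha> n < \<alpha> i" using \<alpha>_dec i by auto
      then show ?thesis using \<alpha>_pos by simp
    qed
  qed
  have Cpos: "\<forall>i\<in>{1..n}. C i > 0"
  proof
    fix i assume i: "i \<in> {1..n}"
    have ai: "\<alpha> i > 0" using apos i by blast
    then have p1: "(\<alpha> i / V) powr (1/\<gamma>) > 0" using Vpos by simp
    have p2: "(\<gamma> - 1) / \<gamma> > 0" using \<gamma> by simp
    show "C i > 0" unfolding C_def using p1 p2 by (rule mult_pos_pos[rotated])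
  qed
  have hpos: "\<forall>x\<in>{0..1}. h x > 0" using h_range by force
  have h'pos: "\<forall>x\<in>{0..1}. h' x > 0"
  proof
    fix x :: real assume x: "x \<in> {0..1}"
    have "real n * \<rho> * x \<le> real n * \<rho>" using x \<rho>(1) npos by (simp add: mult_left_le)
    then have "1 - real n * \<rho> * x > 0" using nr by linarith
    then have "real n * \<rho> / (1 - real n * \<rho> * x) > 0" using \<rho>(1) npos by simp
    then have "h' x / (\<gamma> * h x) > 0" using A3 x by force
    moreover have "\<gamma> * h x > 0" using hpos x g0 by simp
    ultimately show "h' x > 0" by (simp add: zero_less_divide_iff)
  qed
  have tang: "\<forall>x\<in>{0..1}. \<forall>y\<in>{0..1}. h y \<le> h x + h' x * (y - x)"
    using concave_tangent[OF h_concave h_deriv] by blast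
  have h'anti: "h' y \<le> h' x" if "x \<in> {0..1}" "y \<in> {0..1}" "x \<le> y" for x y
  proof (cases "x = y")
    case False
    then have xy: "x < y" using that by simp
    have "h y \<le> h x + h' x * (y - x)" "h x \<le> h y + h' y * (x - y)" using tang that by auto
    then have "0 \<le> (h' x - h' y) * (y - x)" by (simp add: algebra_simps)
    then show ?thesis using xy by (simp add: zero_le_mult_iff)
  qed simp
  have Sb: "0 \<le> S x i \<and> S x i \<le> real n - 1" if "i \<in> {1..n}" "\<forall>j\<in>{1..n}. x j \<in> {0..1}" for x i
    unfolding S_def using S_bounds[OF that] .
  have abpos: "1 - \<rho> * S x i - \<rho> \<ge> 1 - real n * \<rho>" if "i \<in> {1..n}" "\<forall>j\<in>{1..n}. x j \<in> {0..1}" for x i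
  proof -
    have "\<rho> * S x i \<le> \<rho> * (real n - 1)" using Sb[OF that] \<rho>(1) by (intro mult_left_mono) auto
    then show ?thesis by (simp add: algebra_simps)
  qed
  have ueq: "u (x(i := y)) i = C i * F x i y"
    if "i \<in> {1..n}" "\<forall>j\<in>{1..n}. x j \<in> {0..1}" "y \<in> {0..1}" for x :: "nat \<Rightarrow> real" and i and y :: real
  proof -
    have "\<rho> * y \<le> \<rho>" using that(3) \<rho>(1) by (simp add: mult_left_le)
    then have nn: "1 - \<rho> * S x i - \<rho> * y \<ge> 0" using abpos[OF that(1,2)] nr by linarith
    show ?thesis unfolding u_def C_def F_def w_def k_def V_def
      using u_eq[of n \<gamma> V0 \<alpha> i h y \<rho> x \<phi> \<theta> t] Vpos apos that hpos nn by (simp add: V_def S_def less_imp_le)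
  qed
  have NE_iff: "is_NE n u x \<longleftrightarrow> (\<forall>i\<in>{1..n}. x i \<in> {0..1}) \<and> (\<forall>i\<in>{1..n}. \<forall>y\<in>{0..1}. F x i y \<le> F x i (x i))"
    for x
  proof
    assume ne: "is_NE n u x"
    then have r: "\<forall>i\<in>{1..n}. x i \<in> {0..1}" by (simp add: is_NE_def)
    have "\<forall>i\<in>{1..n}. \<forall>y\<in>{0..1}. F x i y \<le> F x i (x i)"
    proof (intro ballI)
      fix i and y :: real assume i: "i \<in> {1..n}" and y: "y \<in> {0..1}"
      have "u (x(i := y)) i \<le> u x i" using ne i y by (simp add: is_NE_def)
      moreover have "u (x(i := y)) i = C i * F x i y" using ueq[OF i r y] .
      moreover have "u x i = C i * F x i (x i)" using ueq[OF i r, of "x i"] r i by simp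
      ultimately have "C i * F x i y \<le> C i * F x i (x i)" by simp
      then show "F x i y \<le> F x i (x i)" using Cpos i by simp
    qed
    with r show "(\<forall>i\<in>{1..n}. x i \<in> {0..1}) \<and> (\<forall>i\<in>{1..n}. \<forall>y\<in>{0..1}. F x i y \<le> F x i (x i))" by simp
  next
    assume a: "(\<forall>i\<in>{1..n}. x i \<in> {0..1}) \<and> (\<forall>i\<in>{1..n}. \<forall>y\<in>{0..1}. F x i y \<le> F x i (x i))"
    then have r: "\<forall>i\<in>{1..n}. x i \<in> {0..1}" by simp
    have "\<forall>i\<in>{1..n}. \<forall>y\<in>{0..1}. u (x(i := y)) i \<le> u x i"
    proof (intro ballI)
      fix i and y :: real assume i: "i \<in> {1..n}" and y: "y \<in> {0..1}"
      have "C i * F x i y \<le> C i * F x i (x i)" using a i y Cpos by (simp add: mult_left_mono less_imp_le)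
      moreover have "u (x(i := y)) i = C i * F x i y" using ueq[OF i r y] .
      moreover have "u x i = C i * F x i (x i)" using ueq[OF i r, of "x i"] r i by simp
      ultimately show "u (x(i := y)) i \<le> u x i" by simp
    qed
    with r show "is_NE n u x" by (simp add: is_NE_def)
  qed
  have Gi_eq: "Gi x i y = h' y / (\<gamma> * h y) - \<rho> / (1 - \<rho> * S x i - \<rho> * y) - k / (w - k * y)" for x i y
    by (simp add: Gi_def GG_def)
  have GGG_eq: "GGG y = h' y / (\<gamma> * h y) - \<rho> / (1 - real n * \<rho> * y) - k / (w - k * y)" for y
    using npos by (simp add: GGG_def GG_def)
  have Fsuff: "\<forall>y\<in>{0..1}. y \<noteq> z \<longrightarrow> F x i y < F x i z"
    if "i \<in> {1..n}" "\<forall>j\<in>{1..n}. x j \<in> {0..1}" "z \<in> {0..1}" "w - k * z > 0"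
       "\<forall>y\<in>{0..1}. Gi x i z * (y - z) \<le> 0" for x i z
    unfolding F_def
    using that abpos[OF that(1,2)] nr0 g0 \<rho>(1)
    by (intro FF_suff[OF h_concave h_deriv hpos]) (auto simp: Gi_def)
  have Fnec: "w - k * x i > 0 \<and> (\<forall>y\<in>{0..1}. Gi x i (x i) * (y - x i) \<le> 0)"
    if "i \<in> {1..n}" "\<forall>j\<in>{1..n}. x j \<in> {0..1}" "\<forall>y\<in>{0..1}. F x i y \<le> F x i (x i)" for x i
    unfolding Gi_def
    using that abpos[OF that(1,2)] nr0 g0 \<rho>(1) w0
    by (intro FF_nec[OF h_deriv hpos]) (auto simp: F_def)
  have uniq: "x = z" if "\<forall>y\<in>A. y \<noteq> z \<longrightarrow> f y < f z" "x \<in> A" "\<forall>y\<in>A. f y \<le> f x" "z \<in> A"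
    for A and f :: "real \<Rightarrow> real" and x z
    using that by force
  have A3_1: "h' 1 / (\<gamma> * hbar) > real n * \<rho> / (1 - real n * \<rho>)" using A3[rule_format, of 1] h1 by simp
  have "\<rho> / (1 - real n * \<rho>) \<le> real n * \<rho> / (1 - real n * \<rho>)" using rle nr0 by (simp add: divide_right_mono)
  then have D0: "D > 0" using A3_1 by (simp add: D_def)
  have tau2eq: "\<tau>\<^sub>2 = D / (1 + D)"
    unfolding \<tau>\<^sub>2_def tau2_def D_def[symmetric] using D0 by (simp add: field_simps)
  have tau1eq: "\<tau>\<^sub>1 = h' 0 / \<gamma> - \<rho>" unfolding \<tau>\<^sub>1_def tau1_def by simp
  have tau2pos: "\<tau>\<^sub>2 > 0" using D0 tau2eq by simp
  have tau2lt: "\<tau>\<^sub>2 < D"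
  proof -
    have "D < D * (1 + D)" using D0 by (simp add: algebra_simps)
    then show ?thesis unfolding tau2eq using D0 by (simp add: divide_less_eq)
  qed
  have tau2lt1: "\<tau>\<^sub>2 < 1" unfolding tau2eq using D0 by (simp add: divide_less_eq)
  have tau1geD: "\<tau>\<^sub>1 \<ge> D"
  proof -
    have "h' 1 \<le> h' 0" using h'anti[of 0 1] by simp
    have "h' 1 / (\<gamma> * hbar) \<le> h' 1 / \<gamma>"
      using h'pos[rule_format, of 1] hbar g0 by (simp add: divide_simps mult_le_cancel_left1 less_imp_le)
    also have "\<dots> \<le> h' 0 / \<gamma>" using \<open>h' 1 \<le> h' 0\<close> g0 by (simp add: divide_right_mono)
    finally have a: "h' 1 / (\<gamma> * hbar) \<le> h' 0 / \<gamma>" .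
    have "\<rho> \<le> \<rho> / (1 - real n * \<rho>)" using nr0 \<rho>(1) npos by (simp add: le_divide_eq)
    then show ?thesis using a by (simp add: D_def tau1eq)
  qed
  have part0: "\<tau>\<^sub>1 > \<tau>\<^sub>2 \<and> \<tau>\<^sub>2 > 0" using tau1geD tau2lt tau2pos by simp
  have kk: "\<theta> * (t / real n) = k" by (simp add: k_def)
  have ww: "1 - \<phi> = w" by (simp add: w_def)
  have Sfacts: "0 < 1 - \<rho> * S x i" "1 - \<rho> * S x i \<le> 1"
    if "i \<in> {1..n}" "\<forall>j\<in>{1..n}. x j \<in> {0..1}" for x i
    using abpos[OF that] nr0 Sb[OF that] \<rho>(1) by auto
  have part1: "k \<ge> \<tau>\<^sub>1 * w \<longrightarrow> is_NE n u (\<lambda>_. 0) \<and> (\<forall>x. is_NE n u x \<longrightarrow> (\<forall>i\<in>{1..n}. x i = 0))"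
  proof
    assume c1: "k \<ge> \<tau>\<^sub>1 * w"
    have kw: "\<tau>\<^sub>1 \<le> k / w" using c1 w0 by (simp add: le_divide_eq)
    have key: "\<forall>y\<in>{0..1}. y \<noteq> 0 \<longrightarrow> F x i y < F x i 0"
      if "i \<in> {1..n}" "\<forall>j\<in>{1..n}. x j \<in> {0..1}" for x i
    proof -
      have "\<rho> \<le> \<rho> / (1 - \<rho> * S x i)" using Sfacts[OF that] \<rho>(1) by (simp add: le_divide_eq)
      then have "Gi x i 0 \<le> 0" using Gi_eq[of x i 0] h0 tau1eq kw by simp
      then have cnd: "\<forall>y\<in>{0..1}. Gi x i 0 * (y - 0) \<le> 0" by (simp add: mult_nonpos_nonneg)
      show ?thesis using Fsuff[OF that _ _ cnd] w0 by simp
    qed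
    show "is_NE n u (\<lambda>_. 0) \<and> (\<forall>x. is_NE n u x \<longrightarrow> (\<forall>i\<in>{1..n}. x i = 0))"
    proof
      have rc: "\<forall>j\<in>{1..n}. (\<lambda>_. 0::real) j \<in> {0..1}" by simp
      have "\<forall>i\<in>{1..n}. \<forall>y\<in>{0..1}. F (\<lambda>_. 0) i y \<le> F (\<lambda>_. 0) i 0"
      proof (intro ballI)
        fix i and y :: real assume i: "i \<in> {1..n}" and y: "y \<in> {0..1}"
        show "F (\<lambda>_. 0) i y \<le> F (\<lambda>_. 0) i 0" using key[OF i rc] y by (cases "y = 0") auto
      qed
      then show "is_NE n u (\<lambda>_. 0)" using NE_iff rc by simp
    next
      show "\<forall>x. is_NE n u x \<longrightarrow> (\<forall>i\<in>{1..n}. x i = 0)"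
      proof (intro allI impI ballI)
        fix x i assume ne: "is_NE n u x" and i: "i \<in> {1..n}"
        have r: "\<forall>j\<in>{1..n}. x j \<in> {0..1}" and mx: "\<forall>y\<in>{0..1}. F x i y \<le> F x i (x i)"
          using ne NE_iff i by auto
        show "x i = 0" using uniq[OF key[OF i r], of "x i"] r i mx by simp
      qed
    qed
  qed
  have part2: "k \<le> \<tau>\<^sub>2 * w \<longrightarrow> is_NE n u (\<lambda>_. 1) \<and> (\<forall>x. is_NE n u x \<longrightarrow> (\<forall>i\<in>{1..n}. x i = 1))"
  proof
    assume c2: "k \<le> \<tau>\<^sub>2 * w"
    have "\<tau>\<^sub>2 * w < w" using tau2lt1 w0 by simp
    then have kw: "w - k > 0" using c2 by simp
    have "k \<le> D * w / (1 + D)" using c2 tau2eq by simp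
    then have "k * (1 + D) \<le> D * w" using D0 by (simp add: pos_le_divide_eq)
    then have "k \<le> D * (w - k)" by (simp add: algebra_simps)
    then have kD: "k / (w - k) \<le> D" using kw by (simp add: divide_le_eq mult.commute)
    have key: "\<forall>y\<in>{0..1}. y \<noteq> 1 \<longrightarrow> F x i y < F x i 1"
      if "i \<in> {1..n}" "\<forall>j\<in>{1..n}. x j \<in> {0..1}" for x i
    proof -
      have "\<rho> / (1 - \<rho> * S x i - \<rho> * 1) \<le> \<rho> / (1 - real n * \<rho>)"
        using abpos[OF that] nr0 \<rho>(1) by (intro divide_left_mono) auto
      then have "Gi x i 1 \<ge> 0" using Gi_eq[of x i 1] h1 kD by (simp add: D_def)
      then have cnd: "\<forall>y\<in>{0..1}. Gi x i 1 * (y - 1) \<le> 0" by (simp add: mult_nonneg_nonpos)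
      show ?thesis using Fsuff[OF that _ _ cnd] kw by simp
    qed
    show "is_NE n u (\<lambda>_. 1) \<and> (\<forall>x. is_NE n u x \<longrightarrow> (\<forall>i\<in>{1..n}. x i = 1))"
    proof
      have rc: "\<forall>j\<in>{1..n}. (\<lambda>_. 1::real) j \<in> {0..1}" by simp
      have "\<forall>i\<in>{1..n}. \<forall>y\<in>{0..1}. F (\<lambda>_. 1) i y \<le> F (\<lambda>_. 1) i 1"
      proof (intro ballI)
        fix i and y :: real assume i: "i \<in> {1..n}" and y: "y \<in> {0..1}"
        show "F (\<lambda>_. 1) i y \<le> F (\<lambda>_. 1) i 1" using key[OF i rc] y by (cases "y = 1") auto
      qed
      then show "is_NE n u (\<lambda>_. 1)" using NE_iff rc by simp
    next
      show "\<forall>x. is_NE n u x \<longrightarrow> (\<forall>i\<in>{1..n}. x i = 1)"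
      proof (intro allI impI ballI)
        fix x i assume ne: "is_NE n u x" and i: "i \<in> {1..n}"
        have r: "\<forall>j\<in>{1..n}. x j \<in> {0..1}" and mx: "\<forall>y\<in>{0..1}. F x i y \<le> F x i (x i)"
          using ne NE_iff i by auto
        show "x i = 1" using uniq[OF key[OF i r], of "x i"] r i mx by simp
      qed
    qed
  qed
  have part3: "\<tau>\<^sub>2 * w < k \<and> k < \<tau>\<^sub>1 * w \<longrightarrow>
       (\<exists>xh. 0 < xh \<and> xh < 1 \<and>
          (h' xh / (\<gamma> * h xh) - \<rho> / (1 - real n * \<rho> * xh)) * (w - k * xh) = k \<and>
          is_NE n u (\<lambda>_. xh) \<and> (\<forall>x. is_NE n u x \<longrightarrow> (\<forall>i\<in>{1..n}. x i = xh)))"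
  proof
    assume c3: "\<tau>\<^sub>2 * w < k \<and> k < \<tau>\<^sub>1 * w"
    have kpos: "k > 0" using c3 tau2pos w0 by (smt (verit) mult_pos_pos)
    have hcont: "continuous_on {0..1} h"
      using h_deriv DERIV_continuous continuous_on_eq_continuous_within by blast
    have Geq: "G = (\<lambda>y. h y powr (1/\<gamma>) * (1 - real n * \<rho> * y) powr (1 / real n) * (w - k * y))"
      by (rule ext) (simp add: G_def FF_def)
    have pos1: "1 - real n * \<rho> * y > 0" if "y \<in> {0..1}" for y
    proof -
      have "real n * \<rho> * y \<le> real n * \<rho>" using that \<rho>(1) npos by (simp add: mult_left_le)
      then show ?thesis using nr by linarith
    qed
    have Gcont: "continuous_on {0..1} G" unfolding Geq
      using hpos pos1 by (intro continuous_intros hcont) force+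
    obtain xh where xh: "xh \<in> {0..1}" and mxh: "\<forall>y\<in>{0..1}. G y \<le> G xh"
      using continuous_attains_sup[OF compact_Icc _ Gcont] by auto
    have nec: "w - k * xh > 0 \<and> (\<forall>y\<in>{0..1}. GGG xh * (y - xh) \<le> 0)"
      unfolding GGG_def using mxh[unfolded G_def] npos \<rho>(1) nr0 w0 xh
      by (intro FF_nec[OF h_deriv hpos g0]) auto
    then have wk: "w - k * xh > 0" and cnd: "\<forall>y\<in>{0..1}. GGG xh * (y - xh) \<le> 0" by auto
    have Gsuff: "\<forall>y\<in>{0..1}. y \<noteq> z \<longrightarrow> G y < G z"
      if "z \<in> {0..1}" "w - k * z > 0" "\<forall>y\<in>{0..1}. GGG z * (y - z) \<le> 0" for z
      unfolding G_def using that npos \<rho>(1) nr0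
      by (intro FF_suff[OF h_concave h_deriv hpos g0]) (auto simp: GGG_def)
    have xh0: "xh \<noteq> 0"
    proof
      assume x0: "xh = 0"
      then have "GGG 0 * (1 - 0) \<le> 0" using cnd[rule_format, of 1] by simp
      then have "GGG 0 \<le> 0" by simp
      then have "h' 0 / \<gamma> - \<rho> - k / w \<le> 0" using GGG_eq[of 0] h0 by simp
      then have "\<tau>\<^sub>1 \<le> k / w" using tau1eq by simp
      then have "\<tau>\<^sub>1 * w \<le> k" using w0 by (simp add: le_divide_eq)
      then show False using c3 by simp
    qed
    have xh1: "xh \<noteq> 1"
    proof
      assume x1: "xh = 1"
      then have wk1: "w - k > 0" using wk by simp
      have "GGG 1 * (0 - 1) \<le> 0" using cnd[rule_format, of 0] x1 by simp
      then have "GGG 1 \<ge> 0" by simp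
      then have "h' 1 / (\<gamma> * hbar) - \<rho> / (1 - real n * \<rho>) - k / (w - k) \<ge> 0" using GGG_eq[of 1] h1 by simp
      then have "k / (w - k) \<le> D" by (simp add: D_def)
      then have "k \<le> D * (w - k)" using wk1 by (simp add: divide_le_eq mult.commute)
      then have "k * (1 + D) \<le> D * w" by (simp add: algebra_simps)
      then have "k \<le> D * w / (1 + D)" using D0 by (simp add: pos_le_divide_eq)
      then show False using c3 tau2eq by simp
    qed
    have xhin: "0 < xh" "xh < 1" using xh xh0 xh1 by auto
    have G0: "GGG xh = 0"
    proof -
      have "GGG xh * (0 - xh) \<le> 0" using cnd[rule_format, of 0] by simp
      then have a: "GGG xh \<ge> 0" using xhin by (simp add: mult_le_0_iff zero_le_mult_iff)
      have "GGG xh * (1 - xh) \<le> 0" using cnd[rule_format, of 1] by simp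
      then have b: "GGG xh \<le> 0" using xhin by (simp add: mult_le_0_iff zero_le_mult_iff)
      from a b show ?thesis by simp
    qed
    have eqn: "(h' xh / (\<gamma> * h xh) - \<rho> / (1 - real n * \<rho> * xh)) * (w - k * xh) = k"
    proof -
      have "h' xh / (\<gamma> * h xh) - \<rho> / (1 - real n * \<rho> * xh) = k / (w - k * xh)"
        using G0 GGG_eq[of xh] by simp
      then show ?thesis using wk by simp
    qed
    have rc: "\<forall>j\<in>{1..n}. (\<lambda>_. xh) j \<in> {0..1}" using xh by simp
    have NEc: "is_NE n u (\<lambda>_. xh)"
    proof -
      have "\<forall>i\<in>{1..n}. \<forall>y\<in>{0..1}. F (\<lambda>_. xh) i y \<le> F (\<lambda>_. xh) i xh"
      proof (intro ballI)
        fix i and y :: real assume i: "i \<in> {1..n}" and y: "y \<in> {0..1}"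
        have Sc: "S (\<lambda>_. xh) i = (real n - 1) * xh" unfolding S_def using S_const[OF i] by simp
        have "1 - \<rho> * S (\<lambda>_. xh) i - \<rho> * xh = 1 - real n * \<rho> * xh" unfolding Sc by (simp add: algebra_simps)
        then have "Gi (\<lambda>_. xh) i xh = GGG xh" using Gi_eq[of "\<lambda>_. xh" i xh] GGG_eq[of xh] by simp
        then have "\<forall>y\<in>{0..1}. Gi (\<lambda>_. xh) i xh * (y - xh) \<le> 0" using G0 by simp
        then have "\<forall>y\<in>{0..1}. y \<noteq> xh \<longrightarrow> F (\<lambda>_. xh) i y < F (\<lambda>_. xh) i xh"
          using Fsuff[OF i rc xh wk] by simp
        then show "F (\<lambda>_. xh) i y \<le> F (\<lambda>_. xh) i xh" using y by (cases "y = xh") auto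
      qed
      then show ?thesis using NE_iff rc by simp
    qed
    define \<Phi> where "\<Phi> y = h' y / (\<gamma> * h y) - k / (w - k * y)" for y
    have Phi_mono: "\<Phi> y2 < \<Phi> y1" if "y1 \<in> {0..1}" "y2 \<in> {0..1}" "y1 < y2" "w - k * y2 > 0" for y1 y2
    proof -
      have hle: "h y1 \<le> h y2" using h_mono that by (auto intro: mono_onD)
      have hy1: "h y1 > 0" and hy2: "h y2 > 0" using hpos that by auto
      have h'le: "h' y2 \<le> h' y1" using h'anti that by simp
      have h'0: "h' y1 > 0" using h'pos that by auto
      have "h' y2 / (\<gamma> * h y2) \<le> h' y1 / (\<gamma> * h y2)"
        using h'le hy2 g0 by (intro divide_right_mono) auto
      also have "\<dots> \<le> h' y1 / (\<gamma> * h y1)"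
        using hle hy1 g0 h'0 by (intro divide_left_mono) auto
      finally have a: "h' y2 / (\<gamma> * h y2) \<le> h' y1 / (\<gamma> * h y1)" .
      have "k * y1 < k * y2" using kpos that by simp
      then have p1: "w - k * y2 < w - k * y1" by simp
      have p2: "0 < (w - k * y1) * (w - k * y2)" using p1 that(4) by (intro mult_pos_pos) auto
      have "k / (w - k * y1) < k / (w - k * y2)"
        using kpos p1 p2 by (intro divide_strict_left_mono) auto
      with a show ?thesis by (simp add: \<Phi>_def)
    qed
    have uniqNE: "\<forall>x. is_NE n u x \<longrightarrow> (\<forall>i\<in>{1..n}. x i = xh)"
    proof (intro allI impI)
      fix x assume ne: "is_NE n u x"
      then have r: "\<forall>j\<in>{1..n}. x j \<in> {0..1}" and mx: "\<forall>i\<in>{1..n}. \<forall>y\<in>{0..1}. F x i y \<le> F x i (x i)"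
        using NE_iff by auto
      define T where "T = (\<Sum>j\<in>{1..n}. x j)"
      have ST: "S x i + x i = T" if "i \<in> {1..n}" for i
        unfolding S_def T_def using sum.remove[of "{1..n}" i x] that by simp
      have nec_i: "w - k * x i > 0 \<and> (\<forall>y\<in>{0..1}. Gi x i (x i) * (y - x i) \<le> 0)" if "i \<in> {1..n}" for i
        using Fnec[OF that r] mx that by blast
      have GiT: "Gi x i (x i) = \<Phi> (x i) - \<rho> / (1 - \<rho> * T)" if "i \<in> {1..n}" for i
      proof -
        have "1 - \<rho> * S x i - \<rho> * x i = 1 - \<rho> * T" unfolding ST[OF that, symmetric] by (simp add: algebra_simps)
        then show ?thesis using Gi_eq[of x i "x i"] by (simp add: \<Phi>_def)
      qed
      have nlt: "\<not> (x i < x j)" if "i \<in> {1..n}" "j \<in> {1..n}" for i j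
      proof
        assume lt: "x i < x j"
        have xi1: "x i < 1" using lt r that by force
        have xj0: "x j > 0" using lt r that by force
        have "Gi x i (x i) * (1 - x i) \<le> 0" using conjunct2[OF nec_i[OF that(1)], rule_format, of 1] by simp
        then have "Gi x i (x i) \<le> 0" using xi1 by (simp add: mult_le_0_iff zero_le_mult_iff)
        then have a: "\<Phi> (x i) \<le> \<rho> / (1 - \<rho> * T)" using GiT[OF that(1)] by simp
        have "Gi x j (x j) * (0 - x j) \<le> 0" using conjunct2[OF nec_i[OF that(2)], rule_format, of 0] by simp
        then have "Gi x j (x j) \<ge> 0" using xj0 by (simp add: mult_le_0_iff zero_le_mult_iff)
        then have b: "\<Phi> (x j) \<ge> \<rho> / (1 - \<rho> * T)" using GiT[OF that(2)] by simp
        have "\<Phi> (x j) < \<Phi> (x i)" using Phi_mono[of "x i" "x j"] r that lt nec_i[OF that(2)] by auto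
        then show False using a b by simp
      qed
      have alleq: "x i = x j" if "i \<in> {1..n}" "j \<in> {1..n}" for i j
        using nlt[OF that] nlt[OF that(2,1)] by simp
      define z where "z = x 1"
      have one: "1 \<in> {1..n}" using n by simp
      have xz: "\<forall>i\<in>{1..n}. x i = z" unfolding z_def using alleq[OF _ one] by blast
      have zin: "z \<in> {0..1}" using r one z_def by auto
      have "(\<Sum>j\<in>{1..n}-{1}. x j) = (\<Sum>j\<in>{1..n}-{1}. (\<lambda>_. z) j)" by (rule sum.cong) (use xz in auto)
      then have S1: "S x 1 = (real n - 1) * z" unfolding S_def using S_const[OF one, of z] by simp
      have "1 - \<rho> * S x 1 - \<rho> * z = 1 - real n * \<rho> * z" unfolding S1 by (simp add: algebra_simps)
      then have Gz: "Gi x 1 z = GGG z" using Gi_eq[of x 1 z] GGG_eq[of z] by simp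
      have necz: "w - k * z > 0" "\<forall>y\<in>{0..1}. GGG z * (y - z) \<le> 0"
        using nec_i[OF one] z_def Gz by auto
      have zmax: "\<forall>y\<in>{0..1}. y \<noteq> z \<longrightarrow> G y < G z" using Gsuff[OF zin necz] .
      have xhmax: "\<forall>y\<in>{0..1}. y \<noteq> xh \<longrightarrow> G y < G xh" using Gsuff[OF xh wk] G0 by simp
      have "z = xh"
      proof (rule ccontr)
        assume "z \<noteq> xh"
        then have "G xh < G z" "G z < G xh" using zmax xhmax zin xh by auto
        then show False by simp
      qed
      then show "\<forall>i\<in>{1..n}. x i = xh" using xz by simp
    qed
    show "\<exists>xh. 0 < xh \<and> xh < 1 \<and>
          (h' xh / (\<gamma> * h xh) - \<rho> / (1 - real n * \<rho> * xh)) * (w - k * xh) = k \<and>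
          is_NE n u (\<lambda>_. xh) \<and> (\<forall>x. is_NE n u x \<longrightarrow> (\<forall>i\<in>{1..n}. x i = xh))"
      using xhin eqn NEc uniqNE by blast
  qed
  show ?thesis unfolding kk ww using part0 part1 part2 part3 by blast
qed

end
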